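(* Let $(S,\mathfrak{n})$ be a complete Noetherian local ring, $I$ an ideal of $S$, and $x_1,\dots,x_r$ a minimal generating sequence of $I$ which is $\Gamma$-expandable for a standard set $\Gamma$ of monomials in $k[T_1,\dots,T_r]$. Then $T_1,\dots,T_r\in\Gamma$.
   Context: A standard set is a set of monomials closed under taking divisors. For $u=T_1^{a_1}\cdots T_r^{a_r}$, $u(x)=x_1^{a_1}\cdots x_r^{a_r}$. A lifting is a map $\sigma:S/I\to S$ with $\sigma(0)=0$ and $\pi\circ\sigma=\mathrm{id}_{S/I}$. The sequence $x_1,\dots,x_r$ is $\Gamma$-expandable if for every lifting $\sigma$, every $f\in S$ has a unique representation $f=\sum_{u\in\Gamma}f_uu(x)$ (convergent sum) with all $f_u\in\sigma(S/I)$. *)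

theory Defs
  imports "HOL-Algebra.Algebra"
begin

primrec ideal_pow :: "('a, 'b) ring_scheme \<Rightarrow> 'a set \<Rightarrow> nat \<Rightarrow> 'a set" where
  "ideal_pow R N 0 = carrier R"
| "ideal_pow R N (Suc k) = ideal_prod R N (ideal_pow R N k)"

definition local_ring_with :: "('a, 'b) ring_scheme \<Rightarrow> 'a set \<Rightarrow> bool" where
  "local_ring_with R N \<longleftrightarrow> cring R \<and> maximalideal N R \<and>
     (\<forall>M. maximalideal M R \<longrightarrow> M = N)"

definition adic_complete :: "('a, 'b) ring_scheme \<Rightarrow> 'a set \<Rightarrow> bool" where
  "adic_complete (R::('a,'b) ring_scheme) N \<longleftrightarrow>
     (\<forall>s::nat \<Rightarrow> 'a. (\<forall>m. s m \<in> carrier R) \<longrightarrow>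
        (\<forall>k. \<exists>M. \<forall>m\<ge>M. \<forall>m'\<ge>M. s m \<ominus>\<^bsub>R\<^esub> s m' \<in> ideal_pow R N k) \<longrightarrow>
        (\<exists>l\<in>carrier R. \<forall>k. \<exists>M. \<forall>m\<ge>M. s m \<ominus>\<^bsub>R\<^esub> l \<in> ideal_pow R N k))"

definition adic_has_sum ::
  "('a, 'b) ring_scheme \<Rightarrow> 'a set \<Rightarrow> ('c \<Rightarrow> 'a) \<Rightarrow> 'c set \<Rightarrow> 'a \<Rightarrow> bool" where
  "adic_has_sum R N a G f \<longleftrightarrow>
     (\<forall>k. \<exists>F0. finite F0 \<and> F0 \<subseteq> G \<and>
        (\<forall>F. finite F \<and> F0 \<subseteq> F \<and> F \<subseteq> G \<longrightarrow>
           f \<ominus>\<^bsub>R\<^esub> finsum R a F \<in> ideal_pow R N k))"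

text \<open>x_1..x_r (as x 0 .. x (r-1)) is a minimal generating sequence of I:
  it generates I and I has no generating sequence of shorter length.\<close>
definition minimal_gen_seq :: "('a, 'b) ring_scheme \<Rightarrow> 'a set \<Rightarrow> nat \<Rightarrow> (nat \<Rightarrow> 'a) \<Rightarrow> bool" where
  "minimal_gen_seq R I r x \<longleftrightarrow>
     x ` {..<r} \<subseteq> carrier R \<and> I = Idl\<^bsub>R\<^esub> (x ` {..<r}) \<and>
     (\<forall>s y. s < r \<longrightarrow> y ` {..<s} \<subseteq> carrier R \<longrightarrow> I \<noteq> Idl\<^bsub>R\<^esub> (y ` {..<s}))"

text \<open>Monomials in T_1..T_r: exponent vectors u with u i = 0 for i >= r.\<close>
definition monomials :: "nat \<Rightarrow> (nat \<Rightarrow> nat) set" where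
  "monomials r = {u. \<forall>i\<ge>r. u i = 0}"

text \<open>The variable T_(i+1) as an exponent vector.\<close>
definition var_mono :: "nat \<Rightarrow> (nat \<Rightarrow> nat)" where
  "var_mono i = (\<lambda>j. if j = i then 1 else 0)"

definition standard_set :: "nat \<Rightarrow> (nat \<Rightarrow> nat) set \<Rightarrow> bool" where
  "standard_set r G \<longleftrightarrow> G \<subseteq> monomials r \<and>
     (\<forall>u\<in>G. \<forall>v. (\<forall>i. v i \<le> u i) \<longrightarrow> v \<in> G)"

definition eval_mono :: "('a, 'b) ring_scheme \<Rightarrow> nat \<Rightarrow> (nat \<Rightarrow> 'a) \<Rightarrow> (nat \<Rightarrow> nat) \<Rightarrow> 'a" where
  "eval_mono R r x u = finprod R (\<lambda>i. x i [^]\<^bsub>R\<^esub> u i) {..<r}"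

definition lifting :: "('a, 'b) ring_scheme \<Rightarrow> 'a set \<Rightarrow> ('a set \<Rightarrow> 'a) \<Rightarrow> bool" where
  "lifting R I \<sigma> \<longleftrightarrow>
     (\<forall>C\<in>carrier (R Quot I). \<sigma> C \<in> carrier R \<and> I +>\<^bsub>R\<^esub> (\<sigma> C) = C) \<and>
     \<sigma> (\<zero>\<^bsub>R Quot I\<^esub>) = \<zero>\<^bsub>R\<^esub>"

definition expandable ::
  "('a, 'b) ring_scheme \<Rightarrow> 'a set \<Rightarrow> 'a set \<Rightarrow> nat \<Rightarrow> (nat \<Rightarrow> 'a) \<Rightarrow> (nat \<Rightarrow> nat) set \<Rightarrow> bool" where
  "expandable R N I r x G \<longleftrightarrow>
     (\<forall>\<sigma>. lifting R I \<sigma> \<longrightarrow>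
       (\<forall>f\<in>carrier R.
          (\<exists>c. (\<forall>u\<in>G. c u \<in> \<sigma> ` carrier (R Quot I)) \<and>
               adic_has_sum R N (\<lambda>u. c u \<otimes>\<^bsub>R\<^esub> eval_mono R r x u) G f) \<and>
          (\<forall>c c'. (\<forall>u\<in>G. c u \<in> \<sigma> ` carrier (R Quot I)) \<and>
                  adic_has_sum R N (\<lambda>u. c u \<otimes>\<^bsub>R\<^esub> eval_mono R r x u) G f \<and>
                  (\<forall>u\<in>G. c' u \<in> \<sigma> ` carrier (R Quot I)) \<and>
                  adic_has_sum R N (\<lambda>u. c' u \<otimes>\<^bsub>R\<^esub> eval_mono R r x u) G f
                  \<longrightarrow> (\<forall>u\<in>G. c u = c' u))))"

end

theory Submission
  imports Defs
begin

no_notation Sum_Type.Plus (infixr \<open><+>\<close> 65)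

lemma (in noetherian_ring) max_in_family:
  assumes "Fam \<noteq> {}" "Fam \<subseteq> {I. ideal I R}"
  shows "\<exists>M\<in>Fam. \<forall>Xa\<in>Fam. M \<subseteq> Xa \<longrightarrow> Xa = M"
proof (rule subset_Zorn)
  fix C assume C: "subset.chain Fam C"
  show "\<exists>U \<in> Fam. \<forall>S' \<in> C. S' \<subseteq> U"
  proof (cases "C = {}")
    case True
    then show ?thesis using assms(1) by auto
  next
    case False
    have "subset.chain { I. ideal I R } C"
      using C assms(2) unfolding pred_on.chain_def by auto
    then have "\<Union>C \<in> C"
      using ideal_chain_is_trivial False by simp
    thus ?thesis
      by (meson C Union_upper pred_on.chain_def subsetCE)
  qed
qed

lemma (in cring) ideal_crit:
  assumes "I \<subseteq> carrier R" "\<zero> \<in> I" "\<And>a b. a\<in>I \<Longrightarrow> b\<in>I \<Longrightarrow> a \<oplus> b \<in> I"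
    "\<And>a. a\<in>I \<Longrightarrow> \<ominus> a \<in> I" "\<And>a x. a\<in>I \<Longrightarrow> x\<in>carrier R \<Longrightarrow> x \<otimes> a \<in> I"
  shows "ideal I R"
proof (rule idealI)
  show "ring R" by (rule ring_axioms)
  show "subgroup I (add_monoid R)"
    using assms by (intro subgroup.intro) (auto simp: a_inv_def[symmetric])
  show "\<And>a x. a\<in>I \<Longrightarrow> x\<in>carrier R \<Longrightarrow> x \<otimes> a \<in> I" by fact
  show "\<And>a x. a\<in>I \<Longrightarrow> x\<in>carrier R \<Longrightarrow> a \<otimes> x \<in> I"
    using assms(1,5) m_comm by (metis subsetD)
qed

definition colon :: "('a, 'b) ring_scheme \<Rightarrow> 'a set \<Rightarrow> 'a \<Rightarrow> 'a set" where
  "colon R q a = {x \<in> carrier R. a \<otimes>\<^bsub>R\<^esub> x \<in> q}"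

lemma (in cring) colon_ideal:
  assumes "ideal q R" "a \<in> carrier R"
  shows "ideal (colon R q a) R"
proof (rule ideal_crit)
  interpret q: ideal q R by fact
  show "colon R q a \<subseteq> carrier R" by (auto simp: colon_def)
  show "\<zero> \<in> colon R q a" using assms by (auto simp: colon_def)
  show "x \<oplus> y \<in> colon R q a" if "x \<in> colon R q a" "y \<in> colon R q a" for x y
    using that assms by (auto simp: colon_def r_distr)
  show "\<ominus> x \<in> colon R q a" if "x \<in> colon R q a" for x
    using that assms by (auto simp: colon_def r_minus)
  show "y \<otimes> x \<in> colon R q a" if "x \<in> colon R q a" "y \<in> carrier R" for x y
  proof -
    have "a \<otimes> (y \<otimes> x) = y \<otimes> (a \<otimes> x)"
      using that assms by (simp add: colon_def m_lcomm)
    then show ?thesis using that assms q.I_l_closed by (auto simp: colon_def)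
  qed
qed

lemma (in cring) ideal_contains_proper_maximal:
  assumes "noetherian_ring R" "ideal I R" "\<one> \<notin> I"
  shows "\<exists>M. maximalideal M R \<and> I \<subseteq> M"
proof -
  interpret noetherian_ring R by fact
  define Fam where "Fam = {J. ideal J R \<and> I \<subseteq> J \<and> \<one> \<notin> J}"
  have ne: "Fam \<noteq> {}" using assms unfolding Fam_def by blast
  have sub: "Fam \<subseteq> {I. ideal I R}" unfolding Fam_def by blast
  obtain M where M1: "M \<in> Fam" and M2: "\<forall>Xa\<in>Fam. M \<subseteq> Xa \<longrightarrow> Xa = M"
    using max_in_family[OF ne sub] by blast
  have Mi: "ideal M R" "I \<subseteq> M" "\<one> \<notin> M" using M1 unfolding Fam_def by auto
  have "maximalideal M R"
  proof (rule maximalidealI)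
    show "ideal M R" by (rule Mi(1))
    show "carrier R \<noteq> M" using Mi(3) by blast
    fix J assume J: "ideal J R" "M \<subseteq> J" "J \<subseteq> carrier R"
    show "J = M \<or> J = carrier R"
    proof (cases "\<one> \<in> J")
      case True then show ?thesis using J(1) ideal.one_imp_carrier by blast
    next
      case False
      then have "J \<in> Fam" using J Mi unfolding Fam_def by blast
      then show ?thesis using M2 J(2) by blast
    qed
  qed
  then show ?thesis using Mi(2) by blast
qed

lemma (in cring) local_one_minus_unit:
  assumes "noetherian_ring R" "local_ring_with R N" "n \<in> N"
  shows "\<one> \<ominus> n \<in> Units R"
proof (rule ccontr)
  assume nu: "\<one> \<ominus> n \<notin> Units R"
  interpret N: maximalideal N R using assms(2) by (simp add: local_ring_with_def)
  have nc: "n \<in> carrier R" using assms(3) N.Icarr by blast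
  have c: "\<one> \<ominus> n \<in> carrier R" using nc by simp
  have "\<one> \<notin> PIdl (\<one> \<ominus> n)"
  proof
    assume "\<one> \<in> PIdl (\<one> \<ominus> n)"
    then obtain y where y: "y \<in> carrier R" "\<one> = y \<otimes> (\<one> \<ominus> n)" by (auto simp: cgenideal_def)
    then have "\<one> \<ominus> n \<in> Units R" unfolding Units_def using y c m_comm[OF y(1) c] by auto
    then show False using nu by blast
  qed
  then obtain M where M: "maximalideal M R" "PIdl (\<one> \<ominus> n) \<subseteq> M"
    using ideal_contains_proper_maximal[OF assms(1) cgenideal_ideal[OF c]] by blast
  have "M = N" using M assms(2) by (simp add: local_ring_with_def)
  then have "\<one> \<ominus> n \<in> N" using M cgenideal_self[OF c] by blast
  then have "(\<one> \<ominus> n) \<oplus> n \<in> N" using assms(3) N.a_closed by blast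
  then have "\<one> \<in> N" using nc by (simp add: minus_eq a_assoc l_neg)
  then show False using N.I_notcarr N.one_imp_carrier by blast
qed


lemma (in ring) set_add_mem_iff: "x \<in> I <+> J \<longleftrightarrow> (\<exists>i\<in>I. \<exists>j\<in>J. x = i \<oplus> j)"
  unfolding set_add_def' by blast

lemma (in ring) ideal_pow_ideal: "ideal N R \<Longrightarrow> ideal (ideal_pow R N k) R"
  by (induct k) (simp_all add: oneideal ideal_prod_is_ideal)

lemma (in ring) prod_sub:
  assumes "ideal q R" "\<And>a b. a \<in> A \<Longrightarrow> b \<in> B \<Longrightarrow> a \<otimes> b \<in> q"
  shows "A \<cdot> B \<subseteq> q"
proof
  fix s assume "s \<in> A \<cdot> B" then show "s \<in> q"
    by (induct s rule: ideal_prod.induct) (auto simp: assms(2) ideal.axioms(1)[OF assms(1)] additive_subgroup.a_closed)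
qed

lemma (in ring) pow_mono:
  assumes "ideal A R" "ideal B R" "A \<subseteq> B"
  shows "ideal_pow R A k \<subseteq> ideal_pow R B k"
proof (induct k)
  case 0 then show ?case by simp
next
  case (Suc k)
  have "A \<cdot> ideal_pow R A k \<subseteq> B \<cdot> ideal_pow R B k"
    by (rule prod_sub) (use Suc assms in \<open>auto intro: ideal_prod.prod ideal_prod_is_ideal ideal_pow_ideal\<close>)
  then show ?case by simp
qed

lemma (in ring) carrier_add_left: "ideal B R \<Longrightarrow> x \<in> carrier R \<Longrightarrow> x \<in> carrier R <+> B"
  unfolding set_add_mem_iff by (metis additive_subgroup.zero_closed ideal.axioms(1) r_zero)

lemma (in ring) carrier_add_right: "ideal B R \<Longrightarrow> x \<in> carrier R \<Longrightarrow> x \<in> B <+> carrier R"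
  unfolding set_add_mem_iff by (metis additive_subgroup.zero_closed ideal.axioms(1) l_zero)

lemma (in cring) pow_sum:
  assumes A: "ideal A R" and B: "ideal B R"
  shows "s + t = n \<Longrightarrow> ideal_pow R (A <+> B) n \<subseteq> ideal_pow R A s <+> ideal_pow R B t"
proof (induct n arbitrary: s t)
  have AB: "ideal (A <+> B) R" using A B add_ideals by blast
  {
    case 0 then show ?case using carrier_add_left[OF ideal_pow_ideal[OF B], of _ 0] ideal.Icarr[OF ideal_pow_ideal[OF AB]] by auto
  next
    case (Suc m)
    have Pc: "ideal_pow R (A <+> B) k \<subseteq> carrier R" for k
      using ideal.Icarr[OF ideal_pow_ideal[OF AB]] by blast
    show ?case
    proof (cases "s = 0 \<or> t = 0")
      case True
      then show ?thesis
      proof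
        assume "s = 0" then show ?thesis
          using carrier_add_left[OF ideal_pow_ideal[OF B]] Pc[of "Suc m"] by (auto simp del: ideal_pow.simps(2))
      next
        assume "t = 0" then show ?thesis
          using carrier_add_right[OF ideal_pow_ideal[OF A]] Pc[of "Suc m"] by (auto simp del: ideal_pow.simps(2))
      qed
    next
      case False
      then obtain s' t' where st: "s = Suc s'" "t = Suc t'" by (metis not0_implies_Suc)
      have IA: "ideal (ideal_pow R A k) R" for k using ideal_pow_ideal[OF A] .
      have IB: "ideal (ideal_pow R B k) R" for k using ideal_pow_ideal[OF B] .
      have q: "ideal (ideal_pow R A s <+> ideal_pow R B t) R" using IA IB add_ideals by blast
      have "(A <+> B) \<cdot> ideal_pow R (A <+> B) m \<subseteq> ideal_pow R A s <+> ideal_pow R B t"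
      proof (rule prod_sub[OF q])
        fix c w assume c: "c \<in> A <+>\<^bsub>R\<^esub> B" and w: "w \<in> ideal_pow R (A <+> B) m"
        obtain a b where ab: "a \<in> A" "b \<in> B" "c = a \<oplus> b" using c set_add_mem_iff by blast
        have ac: "a \<in> carrier R" "b \<in> carrier R" using ideal.Icarr[OF A ab(1)] ideal.Icarr[OF B ab(2)] by auto
        have wc: "w \<in> carrier R" using w Pc by blast
        have "w \<in> ideal_pow R A s' <+> ideal_pow R B t" using Suc(1)[of s' t] st w Suc(2) by auto
        then obtain p p' where p: "p \<in> ideal_pow R A s'" "p' \<in> ideal_pow R B t" "w = p \<oplus> p'"
          using set_add_mem_iff by blast
        have pc: "p \<in> carrier R" "p' \<in> carrier R" using ideal.Icarr[OF IA p(1)] ideal.Icarr[OF IB p(2)] by auto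
        have "a \<otimes> p \<in> A \<cdot> ideal_pow R A s'" using ideal_prod.prod[OF ab(1) p(1)] .
        then have "a \<otimes> p \<in> ideal_pow R A s" using st by simp
        moreover have "a \<otimes> p' \<in> ideal_pow R B t" using ideal.I_l_closed[OF IB p(2) ac(1)] .
        moreover have "a \<otimes> w = a \<otimes> p \<oplus> a \<otimes> p'" using p(3) pc ac by (simp add: r_distr)
        ultimately have 1: "a \<otimes> w \<in> ideal_pow R A s <+> ideal_pow R B t"
          unfolding set_add_mem_iff by blast
        have "w \<in> ideal_pow R A s <+> ideal_pow R B t'" using Suc(1)[of s t'] st w Suc(2) by auto
        then obtain p p' where p: "p \<in> ideal_pow R A s" "p' \<in> ideal_pow R B t'" "w = p \<oplus> p'"
          using set_add_mem_iff by blast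
        have pc: "p \<in> carrier R" "p' \<in> carrier R" using ideal.Icarr[OF IA p(1)] ideal.Icarr[OF IB p(2)] by auto
        have "b \<otimes> p' \<in> B \<cdot> ideal_pow R B t'" using ideal_prod.prod[OF ab(2) p(2)] .
        then have "b \<otimes> p' \<in> ideal_pow R B t" using st by simp
        moreover have "b \<otimes> p \<in> ideal_pow R A s" using ideal.I_l_closed[OF IA p(1) ac(2)] .
        moreover have "b \<otimes> w = b \<otimes> p \<oplus> b \<otimes> p'" using p(3) pc ac by (simp add: r_distr)
        ultimately have 2: "b \<otimes> w \<in> ideal_pow R A s <+> ideal_pow R B t"
          unfolding set_add_mem_iff by blast
        have "c \<otimes> w = a \<otimes> w \<oplus> b \<otimes> w" using ab ac wc l_distr by simp
        then show "c \<otimes> w \<in> ideal_pow R A s <+> ideal_pow R B t"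
          using additive_subgroup.a_closed[OF ideal.axioms(1)[OF q] 1 2] by simp
      qed
      then show ?thesis by simp
    qed
  }
qed

lemma (in cring) pow_principal:
  assumes a: "a \<in> carrier R"
  shows "ideal_pow R (PIdl a) e \<subseteq> PIdl (a [^] e)"
proof (induct e)
  case 0
  show ?case by (auto simp: cgenideal_def) (metis r_one)
next
  case (Suc e)
  have "(PIdl a) \<cdot> ideal_pow R (PIdl a) e \<subseteq> PIdl (a [^] Suc e)"
  proof (rule prod_sub[OF cgenideal_ideal])
    show "a [^] Suc e \<in> carrier R" using a by simp
    fix u v assume u: "u \<in> PIdl a" and v: "v \<in> ideal_pow R (PIdl a) e"
    obtain x where x: "x \<in> carrier R" "u = x \<otimes> a" using u by (auto simp: cgenideal_def)
    obtain y where y: "y \<in> carrier R" "v = y \<otimes> a [^] e" using v Suc by (auto simp: cgenideal_def)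
    have "u \<otimes> v = (x \<otimes> y) \<otimes> a [^] Suc e" using x y a by (simp add: m_ac nat_pow_Suc)
    then show "u \<otimes> v \<in> PIdl (a [^] Suc e)" using x y by (auto simp: cgenideal_def)
  qed
  then show ?case by simp
qed

lemma (in cring) pow_gen:
  assumes "finite A" "A \<subseteq> carrier R" "ideal q R" "\<forall>a\<in>A. \<exists>e::nat. a [^] e \<in> q"
  shows "\<exists>M. ideal_pow R (Idl A) M \<subseteq> q"
  using assms
proof (induct A rule: finite_induct)
  case empty
  have "Idl {} \<subseteq> {\<zero>}" using genideal_minimal[OF zeroideal] by blast
  moreover have "ideal_pow R (Idl {}) 1 \<subseteq> Idl {}"
    using ideal_prod_inter[OF genideal_ideal oneideal, of "{}"] by auto
  ultimately have "ideal_pow R (Idl {}) 1 \<subseteq> q"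
    using additive_subgroup.zero_closed[OF ideal.axioms(1)[OF empty(2)]] by blast
  then show ?case by blast
next
  case (insert a A)
  have ac: "a \<in> carrier R" and Ac: "A \<subseteq> carrier R" using insert by auto
  obtain M where M: "ideal_pow R (Idl A) M \<subseteq> q" using insert by auto
  obtain e :: nat where e: "a [^] e \<in> q" using insert by auto
  have IA: "ideal (Idl A) R" using genideal_ideal[OF Ac] .
  have IP: "ideal (PIdl a) R" using cgenideal_ideal[OF ac] .
  have S: "ideal (PIdl a <+> Idl A) R" using add_ideals[OF IP IA] .
  have "insert a A \<subseteq> PIdl a <+> Idl A"
  proof
    fix b assume "b \<in> insert a A"
    then show "b \<in> PIdl a <+> Idl A"
    proof
      assume "b = a"
      then show ?thesis unfolding set_add_mem_iff
        using cgenideal_self[OF ac] additive_subgroup.zero_closed[OF ideal.axioms(1)[OF IA]] ac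
        by (metis r_zero)
    next
      assume "b \<in> A"
      then show ?thesis unfolding set_add_mem_iff
        using genideal_self[OF Ac] additive_subgroup.zero_closed[OF ideal.axioms(1)[OF IP]] Ac
        by (metis l_zero subsetD)
    qed
  qed
  then have sub: "Idl (insert a A) \<subseteq> PIdl a <+> Idl A" using genideal_minimal[OF S] by blast
  have "ideal_pow R (Idl (insert a A)) (e + M) \<subseteq> ideal_pow R (PIdl a <+> Idl A) (e + M)"
    using pow_mono[OF genideal_ideal S sub] insert by auto
  also have "\<dots> \<subseteq> ideal_pow R (PIdl a) e <+> ideal_pow R (Idl A) M"
    using pow_sum[OF IP IA] by blast
  also have "\<dots> \<subseteq> q"
  proof
    fix z assume "z \<in> ideal_pow R (PIdl a) e <+> ideal_pow R (Idl A) M"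
    then obtain u v where uv: "u \<in> ideal_pow R (PIdl a) e" "v \<in> ideal_pow R (Idl A) M" "z = u \<oplus> v"
      using set_add_mem_iff by blast
    have "PIdl (a [^] e) \<subseteq> q" using cgenideal_minimal[OF insert(5) e] .
    then have "u \<in> q" using uv(1) pow_principal[OF ac] by blast
    moreover have "v \<in> q" using uv(2) M by blast
    ultimately show "z \<in> q" using uv(3) additive_subgroup.a_closed[OF ideal.axioms(1)[OF insert(5)]] by simp
  qed
  finally show ?case by blast
qed

lemma (in cring) colon_mono:
  assumes "ideal q R" "a \<in> carrier R" "k \<le> (k'::nat)"
  shows "colon R q (a [^] k) \<subseteq> colon R q (a [^] k')"
proof
  fix x assume x: "x \<in> colon R q (a [^] k)"
  then have xc: "x \<in> carrier R" "a [^] k \<otimes> x \<in> q" by (auto simp: colon_def)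
  have "a [^] k' = a [^] (k' - k) \<otimes> a [^] k" using assms(2,3) by (simp add: nat_pow_mult)
  then have "a [^] k' \<otimes> x = a [^] (k' - k) \<otimes> (a [^] k \<otimes> x)" using assms(2) xc by (simp add: m_assoc)
  then show "x \<in> colon R q (a [^] k')"
    using xc ideal.I_l_closed[OF assms(1) xc(2), of "a [^] (k' - k)"] assms(2) by (simp add: colon_def)
qed

lemma (in cring) multiples_ideal:
  assumes "ideal N R" "z \<in> carrier R"
  shows "ideal {n \<otimes> z | n. n \<in> N} R"
proof (rule ideal_crit)
  interpret N: ideal N R by fact
  let ?M = "{n \<otimes> z | n. n \<in> N}"
  show "?M \<subseteq> carrier R"
  proof
    fix a assume "a \<in> ?M"
    then obtain n where n: "n \<in> N" "a = n \<otimes> z" by blast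
    show "a \<in> carrier R" using N.Icarr[OF n(1)] assms(2) n(2) by simp
  qed
  have "\<zero> = \<zero> \<otimes> z" using assms(2) by simp
  then show "\<zero> \<in> ?M" using N.zero_closed by blast
  show "a \<oplus> b \<in> ?M" if H: "a \<in> ?M" "b \<in> ?M" for a b
  proof -
    obtain n where n: "n \<in> N" "a = n \<otimes> z" using H(1) by blast
    obtain m where m: "m \<in> N" "b = m \<otimes> z" using H(2) by blast
    have "a \<oplus> b = (n \<oplus> m) \<otimes> z" using n m N.Icarr assms(2) by (simp add: l_distr)
    moreover have "n \<oplus> m \<in> N" using N.a_closed n m by blast
    ultimately show ?thesis by blast
  qed
  show "\<ominus> a \<in> ?M" if H: "a \<in> ?M" for a
  proof -
    obtain n where n: "n \<in> N" "a = n \<otimes> z" using H(1) by blast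
    have "\<ominus> a = (\<ominus> n) \<otimes> z" using n N.Icarr assms(2) by (simp add: l_minus)
    moreover have "\<ominus> n \<in> N" using N.a_inv_closed n by blast
    ultimately show ?thesis by blast
  qed
  show "x \<otimes> a \<in> ?M" if H: "a \<in> ?M" "x \<in> carrier R" for a x
  proof -
    obtain n where n: "n \<in> N" "a = n \<otimes> z" using H(1) by blast
    have "x \<otimes> a = (x \<otimes> n) \<otimes> z" using n N.Icarr assms(2) H(2) by (simp add: m_assoc)
    moreover have "x \<otimes> n \<in> N" using N.I_l_closed n H(2) by blast
    ultimately show ?thesis by blast
  qed
qed

lemma (in ring) sum_left_sub: "ideal A R \<Longrightarrow> ideal B R \<Longrightarrow> A \<subseteq> A <+> B"
proof
  fix x assume A: "ideal A R" and B: "ideal B R" and x: "x \<in> A"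
  have "x = x \<oplus> \<zero>" using ideal.Icarr[OF A x] by simp
  moreover have "\<zero> \<in> B" using additive_subgroup.zero_closed[OF ideal.axioms(1)[OF B]] .
  ultimately show "x \<in> A <+> B" unfolding set_add_mem_iff using x by blast
qed

lemma (in ring) sum_right_sub: "ideal A R \<Longrightarrow> ideal B R \<Longrightarrow> B \<subseteq> A <+> B"
proof
  fix x assume A: "ideal A R" and B: "ideal B R" and x: "x \<in> B"
  have "x = \<zero> \<oplus> x" using ideal.Icarr[OF B x] by simp
  moreover have "\<zero> \<in> A" using additive_subgroup.zero_closed[OF ideal.axioms(1)[OF A]] .
  ultimately show "x \<in> A <+> B" unfolding set_add_mem_iff using x by blast
qed

lemma (in cring) krull_step:
  assumes noeth: "noetherian_ring R" and Nid: "ideal N R" and J: "ideal J R" and z: "z \<in> carrier R"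
    and all: "\<forall>k. z \<in> J <+> ideal_pow R N k"
  shows "z \<in> J <+> {n \<otimes> z | n. n \<in> N}"
proof (rule ccontr)
  define P where "P = J <+> {n \<otimes> z | n. n \<in> N}"
  assume zP: "z \<notin> J <+> {n \<otimes> z | n. n \<in> N}"
  have Pid: "ideal P R" unfolding P_def using add_ideals[OF J multiples_ideal[OF Nid z]] .
  have JP: "J \<subseteq> P" unfolding P_def using sum_left_sub[OF J multiples_ideal[OF Nid z]] .
  have aP: "a \<otimes> z \<in> P" if aN: "a \<in> N" for a
  proof -
    have "a \<otimes> z \<in> {n \<otimes> z | n. n \<in> N}" using aN by blast
    then show ?thesis unfolding P_def using sum_right_sub[OF J multiples_ideal[OF Nid z]] by blast
  qed
  define Fam where "Fam = {q. ideal q R \<and> P \<subseteq> q \<and> z \<notin> q}"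
  have ne: "Fam \<noteq> {}" using Pid zP unfolding Fam_def P_def by blast
  have sub: "Fam \<subseteq> {I. ideal I R}" unfolding Fam_def by blast
  obtain q where q1: "q \<in> Fam" and q2: "\<forall>Xa\<in>Fam. q \<subseteq> Xa \<longrightarrow> Xa = q"
    using noetherian_ring.max_in_family[OF noeth ne sub] by blast
  have qi: "ideal q R" "P \<subseteq> q" "z \<notin> q" using q1 unfolding Fam_def by auto
  have powq: "\<exists>e::nat. a [^] e \<in> q" if aN: "a \<in> N" for a
  proof -
    have ac: "a \<in> carrier R" using ideal.Icarr[OF Nid aN] .
    define Fam2 where "Fam2 = {colon R q (a [^] k) | k::nat. k \<ge> 1}"
    have ne2: "Fam2 \<noteq> {}" unfolding Fam2_def by auto
    have sub2: "Fam2 \<subseteq> {I. ideal I R}" unfolding Fam2_def using colon_ideal[OF qi(1)] ac by auto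
    obtain Q where Q1: "Q \<in> Fam2" and Q2: "\<forall>Xa\<in>Fam2. Q \<subseteq> Xa \<longrightarrow> Xa = Q"
      using noetherian_ring.max_in_family[OF noeth ne2 sub2] by blast
    obtain n :: nat where n: "n \<ge> 1" "Q = colon R q (a [^] n)" using Q1 unfolding Fam2_def by auto
    have eq2: "colon R q (a [^] (n + n)) = colon R q (a [^] n)"
    proof -
      have "colon R q (a [^] (n + n)) \<in> Fam2" unfolding Fam2_def using n(1) by auto
      moreover have "Q \<subseteq> colon R q (a [^] (n + n))" using colon_mono[OF qi(1) ac, of n "n + n"] n(2) by simp
      ultimately show ?thesis using Q2 n(2) by blast
    qed
    have anc: "a [^] n \<in> carrier R" using ac by simp
    show ?thesis
    proof (rule ccontr)
      assume nq: "\<not> (\<exists>e::nat. a [^] e \<in> q)"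
      define q1 where "q1 = q <+> PIdl (a [^] n)"
      have q1i: "ideal q1 R" unfolding q1_def using add_ideals[OF qi(1) cgenideal_ideal[OF anc]] .
      have qq1: "q \<subseteq> q1" unfolding q1_def using sum_left_sub[OF qi(1) cgenideal_ideal[OF anc]] .
      have an1: "a [^] n \<in> q1" unfolding q1_def
        using sum_right_sub[OF qi(1) cgenideal_ideal[OF anc]] cgenideal_self[OF anc] by blast
      have zq1: "z \<in> q1"
      proof (rule ccontr)
        assume "z \<notin> q1"
        then have "q1 \<in> Fam" unfolding Fam_def using q1i qq1 qi by blast
        then have "q1 = q" using q2 qq1 by blast
        then show False using an1 nq by blast
      qed
      define q2' where "q2' = colon R q (a [^] n)"
      have q2i: "ideal q2' R" unfolding q2'_def using colon_ideal[OF qi(1) anc] .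
      have qq2: "q \<subseteq> q2'"
      proof
        fix x assume x: "x \<in> q"
        have "x \<otimes> a [^] n \<in> q" using ideal.I_r_closed[OF qi(1) x anc] .
        then have "a [^] n \<otimes> x \<in> q" using ideal.Icarr[OF qi(1) x] anc by (simp add: m_comm)
        then show "x \<in> q2'" unfolding q2'_def colon_def using ideal.Icarr[OF qi(1) x] by blast
      qed
      have zq2: "z \<in> q2'"
      proof (rule ccontr)
        assume "z \<notin> q2'"
        then have "q2' \<in> Fam" unfolding Fam_def using q2i qq2 qi by blast
        then have e: "q2' = q" using q2 qq2 by blast
        have "a \<otimes> z \<in> q" using aP[OF aN] qi by blast
        then have "a [^] (n - 1) \<otimes> (a \<otimes> z) \<in> q" using ideal.I_l_closed[OF qi(1)] ac by simp
        moreover have "a [^] (n - 1) \<otimes> (a \<otimes> z) = a [^] n \<otimes> z"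
        proof -
          have "a [^] n = a [^] (n - 1) \<otimes> a" using n(1) ac nat_pow_Suc[of a "n - 1"] by simp
          then show ?thesis using ac z by (simp add: m_assoc)
        qed
        ultimately have "z \<in> q2'" unfolding q2'_def colon_def using z by simp
        then show False using \<open>z \<notin> q2'\<close> by blast
      qed
      obtain y w where yw: "y \<in> q" "w \<in> PIdl (a [^] n)" "z = y \<oplus> w"
        using zq1 unfolding q1_def set_add_mem_iff by blast
      obtain s where s: "s \<in> carrier R" "w = s \<otimes> a [^] n" using yw(2) by (auto simp: cgenideal_def)
      have yc: "y \<in> carrier R" using ideal.Icarr[OF qi(1) yw(1)] .
      have "a [^] n \<otimes> z \<in> q" using zq2 unfolding q2'_def colon_def by blast
      moreover have "a [^] n \<otimes> z = a [^] n \<otimes> y \<oplus> a [^] (n + n) \<otimes> s"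
        using yw(3) s yc anc ac by (simp add: r_distr nat_pow_mult[symmetric] m_ac)
      moreover have "a [^] n \<otimes> y \<in> q" using ideal.I_l_closed[OF qi(1) yw(1) anc] .
      ultimately have "a [^] (n + n) \<otimes> s \<in> q"
      proof -
        assume X: "a [^] n \<otimes> z \<in> q" and E: "a [^] n \<otimes> z = a [^] n \<otimes> y \<oplus> a [^] (n + n) \<otimes> s"
          and Y: "a [^] n \<otimes> y \<in> q"
        have Yc: "a [^] n \<otimes> y \<in> carrier R" using anc yc by simp
        have Wc: "a [^] (n + n) \<otimes> s \<in> carrier R" using ac s by simp
        have "a [^] (n + n) \<otimes> s = \<ominus> (a [^] n \<otimes> y) \<oplus> (a [^] n \<otimes> y \<oplus> a [^] (n + n) \<otimes> s)"
          using Yc Wc by (simp add: a_assoc[symmetric] l_neg)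
        also have "\<dots> = \<ominus> (a [^] n \<otimes> y) \<oplus> a [^] n \<otimes> z" using E by simp
        finally show ?thesis
          using additive_subgroup.a_closed[OF ideal.axioms(1)[OF qi(1)] additive_subgroup.a_inv_closed[OF ideal.axioms(1)[OF qi(1)] Y] X]
          by simp
      qed
      then have "s \<in> colon R q (a [^] n)" using eq2 s unfolding colon_def by blast
      then have "w \<in> q" using s anc by (simp add: colon_def m_comm)
      then have "z \<in> q" using yw additive_subgroup.a_closed[OF ideal.axioms(1)[OF qi(1)]] by simp
      then show False using qi by blast
    qed
  qed
  obtain A where A: "A \<subseteq> carrier R" "finite A" "N = Idl A"
    using noetherian_ring.finetely_gen[OF noeth Nid] by blast
  have "A \<subseteq> N" using A genideal_self by auto
  then obtain M where M: "ideal_pow R (Idl A) M \<subseteq> q" using pow_gen[OF A(2,1) qi(1)] powq by blast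
  have "z \<in> J <+> ideal_pow R N M" using all by blast
  then obtain j v where "j \<in> J" "v \<in> ideal_pow R N M" "z = j \<oplus> v" using set_add_mem_iff by blast
  then have "z \<in> q" using JP qi M A(3) additive_subgroup.a_closed[OF ideal.axioms(1)[OF qi(1)]] by blast
  then show False using qi by blast
qed

lemma (in cring) krull_closed:
  assumes noeth: "noetherian_ring R" and loc: "local_ring_with R N" and J: "ideal J R"
    and z: "z \<in> carrier R" and all: "\<forall>k. z \<in> J <+> ideal_pow R N k"
  shows "z \<in> J"
proof -
  have Nid: "ideal N R" using loc by (simp add: local_ring_with_def maximalideal_def)
  have "z \<in> J <+> {n \<otimes> z | n. n \<in> N}" using krull_step[OF noeth Nid J z all] .
  then obtain j w where jw: "j \<in> J" "w \<in> {n \<otimes> z | n. n \<in> N}" "z = j \<oplus> w"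
    unfolding set_add_mem_iff by blast
  obtain n where n: "n \<in> N" "w = n \<otimes> z" using jw(2) by blast
  have nc: "n \<in> carrier R" using ideal.Icarr[OF Nid n(1)] .
  have jc: "j \<in> carrier R" using ideal.Icarr[OF J jw(1)] .
  have u: "\<one> \<ominus> n \<in> Units R" using local_one_minus_unit[OF noeth loc n(1)] .
  have uc: "\<one> \<ominus> n \<in> carrier R" using nc by simp
  have "(\<one> \<ominus> n) \<otimes> z = z \<oplus> \<ominus> (n \<otimes> z)" using nc z by (simp add: minus_eq l_distr l_minus)
  also have "\<dots> = (j \<oplus> n \<otimes> z) \<oplus> \<ominus> (n \<otimes> z)"
    using arg_cong[where f="\<lambda>s. s \<oplus> \<ominus> (n \<otimes> z)", OF jw(3)] n(2) by simp
  also have "\<dots> = j" using jc nc z by (simp add: a_assoc r_neg)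
  finally have e: "(\<one> \<ominus> n) \<otimes> z = j" .
  have "z = inv (\<one> \<ominus> n) \<otimes> ((\<one> \<ominus> n) \<otimes> z)"
    using u z uc by (simp add: m_assoc[symmetric] Units_l_inv)
  then have "z = inv (\<one> \<ominus> n) \<otimes> j" using e by simp
  then show ?thesis using ideal.I_l_closed[OF J jw(1)] u by (simp add: Units_inv_closed)
qed

lemma (in ring) finsum_in_ideal:
  assumes J: "ideal J R" and F: "finite F" and g: "\<forall>u\<in>F. g u \<in> J"
  shows "finsum R g F \<in> J"
  using F g
proof (induct F rule: finite_induct)
  case empty
  then show ?case using additive_subgroup.zero_closed[OF ideal.axioms(1)[OF J]] by (simp add: finsum_empty)
next
  case (insert a F)
  have gc: "g \<in> F \<rightarrow> carrier R" "g a \<in> carrier R" using insert ideal.Icarr[OF J] by auto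
  have "finsum R g (insert a F) = g a \<oplus> finsum R g F"
    using finsum_insert[OF insert(1,2) gc] .
  then show ?case using insert additive_subgroup.a_closed[OF ideal.axioms(1)[OF J]] by simp
qed

lemma (in cring) eval_mono_in:
  assumes J: "ideal J R" and xc: "x ` {..<r} \<subseteq> carrier R" and j: "j < r" "u j \<noteq> 0" "x j \<in> J"
  shows "eval_mono R r x u \<in> J"
proof -
  have fc: "(\<lambda>i. x i [^] u i) \<in> ({..<r} - {j}) \<rightarrow> carrier R" using xc by auto
  have fj: "x j [^] u j \<in> carrier R" using xc j by auto
  have e: "{..<r} = insert j ({..<r} - {j})" using j by auto
  have "eval_mono R r x u = x j [^] u j \<otimes> finprod R (\<lambda>i. x i [^] u i) ({..<r} - {j})"
    unfolding eval_mono_def by (subst e) (rule finprod_insert[OF _ _ fc fj], auto)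
  moreover have "x j [^] u j \<in> J"
  proof -
    obtain m where m: "u j = Suc m" using j(2) not0_implies_Suc by blast
    have "x j [^] u j = x j [^] m \<otimes> x j" using m by (simp add: nat_pow_Suc)
    moreover have "x j \<in> carrier R" using xc j by auto
    ultimately show ?thesis using ideal.I_l_closed[OF J j(3), of "x j [^] m"] by simp
  qed
  moreover have "finprod R (\<lambda>i. x i [^] u i) ({..<r} - {j}) \<in> carrier R"
    using finprod_closed[OF fc] .
  ultimately show ?thesis using ideal.I_r_closed[OF J] by simp
qed

lemma (in cring) eval_mono_zero: "eval_mono R r x (\<lambda>_. 0) = \<one>"
  unfolding eval_mono_def by simp

lemma (in ring) lifting_exists:
  assumes I: "ideal I R"
  shows "\<exists>\<sigma>. lifting R I \<sigma>"
proof -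
  define \<sigma> where "\<sigma> C = (if C = I then \<zero> else (SOME a. a \<in> carrier R \<and> I +> a = C))" for C
  have A1: "\<forall>C\<in>carrier (R Quot I). \<sigma> C \<in> carrier R \<and> I +> \<sigma> C = C"
  proof
    fix C assume "C \<in> carrier (R Quot I)"
    then obtain a where a: "a \<in> carrier R" "C = I +> a"
      unfolding FactRing_def A_RCOSETS_def' by auto
    show "\<sigma> C \<in> carrier R \<and> I +> \<sigma> C = C"
    proof (cases "C = I")
      case True
      then show ?thesis unfolding \<sigma>_def
        using a_rcos_zero[OF I additive_subgroup.zero_closed[OF ideal.axioms(1)[OF I]]] by simp
    next
      case False
      have ex: "\<exists>a. a \<in> carrier R \<and> I +> a = C" using a by blast
      show ?thesis unfolding \<sigma>_def using False someI_ex[OF ex] by simp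
    qed
  qed
  have A2: "\<sigma> \<zero>\<^bsub>R Quot I\<^esub> = \<zero>" unfolding \<sigma>_def FactRing_def by simp
  have "lifting R I \<sigma>" unfolding lifting_def using A1 A2 by blast
  then show ?thesis by blast
qed

lemma (in ring) alg1: "s \<in> carrier R \<Longrightarrow> y \<in> carrier R \<Longrightarrow> s \<oplus> (y \<oplus> \<ominus> s) = y"
  using a_lcomm[of s y "\<ominus> s"] by (simp add: r_neg)

lemma (in ring) alg2: "x \<in> carrier R \<Longrightarrow> c \<in> carrier R \<Longrightarrow> s \<in> carrier R \<Longrightarrow>
   x \<ominus> (c \<oplus> s) = (x \<ominus> c) \<oplus> \<ominus> s"
  by (simp add: minus_eq minus_add a_assoc)

lemma (in ring) alg3: "x \<in> carrier R \<Longrightarrow> c \<in> carrier R \<Longrightarrow> x \<ominus> (x \<ominus> c) = c"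
proof -
  assume x: "x \<in> carrier R" and c: "c \<in> carrier R"
  have "x \<ominus> (x \<ominus> c) = x \<oplus> (\<ominus> x \<oplus> c)" using x c by (simp add: minus_eq minus_add minus_minus)
  also have "\<dots> = (x \<oplus> \<ominus> x) \<oplus> c" using x c by (simp add: a_assoc)
  also have "\<dots> = c" using x c by (simp add: r_neg)
  finally show ?thesis .
qed

theorem proposition3p12:
  fixes S :: "('a, 'b) ring_scheme" and N I :: "'a set" and r :: nat
    and x :: "nat \<Rightarrow> 'a" and G :: "(nat \<Rightarrow> nat) set"
  assumes "noetherian_ring S"
    and "local_ring_with S N"
    and "adic_complete S N"
    and "ideal I S"
    and "minimal_gen_seq S I r x"
    and "standard_set r G"
    and "expandable S N I r x G"
  shows "\<forall>i<r. var_mono i \<in> G"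
proof (rule ccontr)
  assume "\<not> (\<forall>i<r. var_mono i \<in> G)"
  then obtain i where i: "i < r" "var_mono i \<notin> G" by blast
  interpret S: cring S using assms(2) by (simp add: local_ring_with_def)
  have noeth: "noetherian_ring S" by fact
  have loc: "local_ring_with S N" by fact
  have Iid: "ideal I S" by fact
  have Nmax: "maximalideal N S" using loc by (simp add: local_ring_with_def)
  have Nid: "ideal N S" using Nmax by (simp add: maximalideal_def)
  have oneN: "\<one>\<^bsub>S\<^esub> \<notin> N"
  proof
    assume "\<one>\<^bsub>S\<^esub> \<in> N"
    then have "N = carrier S" using ideal.one_imp_carrier[OF Nid] by blast
    then show False using maximalideal.I_notcarr[OF Nmax] by simp
  qed
  have xc: "x ` {..<r} \<subseteq> carrier S" and Idef: "I = Idl\<^bsub>S\<^esub> (x ` {..<r})"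
    and minim: "\<And>s y. s < r \<Longrightarrow> y ` {..<s} \<subseteq> carrier S \<Longrightarrow> I \<noteq> Idl\<^bsub>S\<^esub> (y ` {..<s})"
    using assms(5) unfolding minimal_gen_seq_def by blast+
  have Gm: "G \<subseteq> monomials r" and Gdown: "\<And>u v. u \<in> G \<Longrightarrow> (\<forall>i. v i \<le> u i) \<Longrightarrow> v \<in> G"
    using assms(6) unfolding standard_set_def by blast+
  have ui: "u i = 0" if u: "u \<in> G" for u
  proof (rule ccontr)
    assume "u i \<noteq> 0"
    then have "\<forall>j. var_mono i j \<le> u j" unfolding var_mono_def by auto
    then show False using Gdown[OF u] i(2) by blast
  qed
  define J where "J = Idl\<^bsub>S\<^esub> (x ` ({..<r} - {i}))"
  have Jsub: "x ` ({..<r} - {i}) \<subseteq> carrier S" using xc by auto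
  have Jid: "ideal J S" unfolding J_def using S.genideal_ideal[OF Jsub] .
  have xJ: "x j \<in> J" if jj: "j < r" "j \<noteq> i" for j
  proof -
    have "x j \<in> x ` ({..<r} - {i})" using jj by blast
    then show ?thesis unfolding J_def using S.genideal_self[OF Jsub] by (rule subsetD[rotated])
  qed
  have xI: "x j \<in> I" if jj: "j < r" for j
  proof -
    have "x j \<in> x ` {..<r}" using jj by blast
    then have "x j \<in> Idl\<^bsub>S\<^esub> (x ` {..<r})" using S.genideal_self[OF xc] by (rule subsetD[rotated])
    then show ?thesis using Idef by simp
  qed
  have "x ` ({..<r} - {i}) \<subseteq> I" using xI by blast
  then have JI: "J \<subseteq> I" unfolding J_def by (rule S.genideal_minimal[OF Iid])
  obtain \<sigma> where \<sigma>: "lifting S I \<sigma>" using S.lifting_exists[OF Iid] by blast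
  have \<sigma>c: "\<sigma> C \<in> carrier S" "I +>\<^bsub>S\<^esub> \<sigma> C = C" if "C \<in> carrier (S Quot I)" for C
    using \<sigma> that unfolding lifting_def by blast+
  have zq: "\<zero>\<^bsub>S Quot I\<^esub> = I" unfolding FactRing_def by simp
  have \<sigma>0: "\<sigma> I = \<zero>\<^bsub>S\<^esub>" using \<sigma> zq unfolding lifting_def by metis
  have exp: "\<And>f. f \<in> carrier S \<Longrightarrow> \<exists>c. (\<forall>u\<in>G. c u \<in> \<sigma> ` carrier (S Quot I)) \<and>
               adic_has_sum S N (\<lambda>u. c u \<otimes>\<^bsub>S\<^esub> eval_mono S r x u) G f"
  proof -
    fix f assume f: "f \<in> carrier S"
    have "\<forall>\<sigma>. lifting S I \<sigma> \<longrightarrow> (\<forall>f\<in>carrier S.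
          (\<exists>c. (\<forall>u\<in>G. c u \<in> \<sigma> ` carrier (S Quot I)) \<and>
               adic_has_sum S N (\<lambda>u. c u \<otimes>\<^bsub>S\<^esub> eval_mono S r x u) G f) \<and>
          (\<forall>c c'. (\<forall>u\<in>G. c u \<in> \<sigma> ` carrier (S Quot I)) \<and>
                  adic_has_sum S N (\<lambda>u. c u \<otimes>\<^bsub>S\<^esub> eval_mono S r x u) G f \<and>
                  (\<forall>u\<in>G. c' u \<in> \<sigma> ` carrier (S Quot I)) \<and>
                  adic_has_sum S N (\<lambda>u. c' u \<otimes>\<^bsub>S\<^esub> eval_mono S r x u) G f
                  \<longrightarrow> (\<forall>u\<in>G. c u = c' u)))"
      using assms(7) unfolding expandable_def .
    note E = this[THEN spec[of _ \<sigma>], THEN mp, OF \<sigma>]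
    note E2 = bspec[OF E f]
    then show "\<exists>c. (\<forall>u\<in>G. c u \<in> \<sigma> ` carrier (S Quot I)) \<and>
               adic_has_sum S N (\<lambda>u. c u \<otimes>\<^bsub>S\<^esub> eval_mono S r x u) G f"
      by (rule conjunct1)
  qed
  define z0 :: "nat \<Rightarrow> nat" where "z0 = (\<lambda>_. 0)"
  have z0G: "z0 \<in> G"
  proof (cases "G = {}")
    case True
    obtain c where "adic_has_sum S N (\<lambda>u. c u \<otimes>\<^bsub>S\<^esub> eval_mono S r x u) G \<one>\<^bsub>S\<^esub>"
      using exp[OF S.one_closed] by blast
    then have "\<forall>k. \<exists>F0. finite F0 \<and> F0 \<subseteq> G \<and>
        (\<forall>F. finite F \<and> F0 \<subseteq> F \<and> F \<subseteq> G \<longrightarrow>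
           \<one>\<^bsub>S\<^esub> \<ominus>\<^bsub>S\<^esub> finsum S (\<lambda>u. c u \<otimes>\<^bsub>S\<^esub> eval_mono S r x u) F \<in> ideal_pow S N k)"
      unfolding adic_has_sum_def .
    from this[THEN spec, of 1] obtain F0 where "finite F0" "F0 \<subseteq> G" "\<forall>F. finite F \<and> F0 \<subseteq> F \<and> F \<subseteq> G \<longrightarrow>
        \<one>\<^bsub>S\<^esub> \<ominus>\<^bsub>S\<^esub> finsum S (\<lambda>u. c u \<otimes>\<^bsub>S\<^esub> eval_mono S r x u) F \<in> ideal_pow S N 1"
      by blast
    then have "\<one>\<^bsub>S\<^esub> \<ominus>\<^bsub>S\<^esub> finsum S (\<lambda>u. c u \<otimes>\<^bsub>S\<^esub> eval_mono S r x u) {} \<in> ideal_pow S N 1"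
      using True by auto
    then have "\<one>\<^bsub>S\<^esub> \<in> N" using S.ideal_prod_one[OF Nid] by (simp add: S.finsum_empty S.minus_eq)
    then show ?thesis using oneN by blast
  next
    case False
    then obtain u where "u \<in> G" by blast
    then show ?thesis using Gdown unfolding z0_def by auto
  qed
  have xic: "x i \<in> carrier S" using xc i by auto
  obtain c where c: "\<forall>u\<in>G. c u \<in> \<sigma> ` carrier (S Quot I)"
    and hs: "adic_has_sum S N (\<lambda>u. c u \<otimes>\<^bsub>S\<^esub> eval_mono S r x u) G (x i)"
    using exp[OF xic] by blast
  have cc: "c u \<in> carrier S" if uG: "u \<in> G" for u
  proof -
    have "c u \<in> \<sigma> ` carrier (S Quot I)" using c uG by blast
    then obtain C where C: "C \<in> carrier (S Quot I)" "c u = \<sigma> C" by blast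
    show ?thesis using \<sigma>c(1)[OF C(1)] C(2) by simp
  qed
  define g where "g = (\<lambda>u. c u \<otimes>\<^bsub>S\<^esub> eval_mono S r x u)"
  have evc: "eval_mono S r x u \<in> carrier S" for u
    unfolding eval_mono_def using xc by (intro S.finprod_closed) auto
  have gc: "g u \<in> carrier S" if "u \<in> G" for u unfolding g_def using cc[OF that] evc by simp
  have g0: "g z0 = c z0"
  proof -
    have "eval_mono S r x z0 = \<one>\<^bsub>S\<^esub>" unfolding z0_def by (rule S.eval_mono_zero)
    then show ?thesis unfolding g_def using cc[OF z0G] by simp
  qed
  have gJ: "g u \<in> J" if u: "u \<in> G" "u \<noteq> z0" for u
  proof -
    obtain j where j: "u j \<noteq> 0" using u(2) unfolding z0_def by auto
    have jr: "j < r"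
    proof (rule ccontr)
      assume "\<not> j < r"
      moreover have "u \<in> monomials r" using Gm u(1) by blast
      ultimately have "u j = 0" unfolding monomials_def by simp
      then show False using j by simp
    qed
    have ji: "j \<noteq> i" using ui[OF u(1)] j by auto
    have "eval_mono S r x u \<in> J" using S.eval_mono_in[where u=u, OF Jid xc jr j xJ[OF jr ji]] .
    from ideal.I_l_closed[OF Jid this cc[OF u(1)]] show ?thesis unfolding g_def .
  qed
  have c0c: "c z0 \<in> carrier S" using cc[OF z0G] .
  have key: "\<forall>k. x i \<ominus>\<^bsub>S\<^esub> c z0 \<in> J <+>\<^bsub>S\<^esub> ideal_pow S N k"
  proof
    fix k
    obtain F0 where F0: "finite F0" "F0 \<subseteq> G" "\<And>F. finite F \<Longrightarrow> F0 \<subseteq> F \<Longrightarrow> F \<subseteq> G \<Longrightarrow>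
        x i \<ominus>\<^bsub>S\<^esub> finsum S g F \<in> ideal_pow S N k"
    proof -
      have "\<forall>k. \<exists>F0. finite F0 \<and> F0 \<subseteq> G \<and>
        (\<forall>F. finite F \<and> F0 \<subseteq> F \<and> F \<subseteq> G \<longrightarrow> x i \<ominus>\<^bsub>S\<^esub> finsum S g F \<in> ideal_pow S N k)"
        using hs unfolding adic_has_sum_def g_def .
      from this[THEN spec, of k] obtain F1 where F1: "finite F1" "F1 \<subseteq> G"
        "\<forall>F. finite F \<and> F1 \<subseteq> F \<and> F \<subseteq> G \<longrightarrow> x i \<ominus>\<^bsub>S\<^esub> finsum S g F \<in> ideal_pow S N k"
        by blast
      show ?thesis by (rule that[OF F1(1,2)]) (use F1(3) in blast)
    qed
    define F' where "F' = F0 - {z0}"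
    have F'f: "finite F'" "z0 \<notin> F'" "F' \<subseteq> G" using F0(1,2) unfolding F'_def by auto
    have h1: "finite (insert z0 F')" using F'f(1) by simp
    have h2: "F0 \<subseteq> insert z0 F'" unfolding F'_def by blast
    have h3: "insert z0 F' \<subseteq> G" using F'f(3) z0G by blast
    have "x i \<ominus>\<^bsub>S\<^esub> finsum S g (insert z0 F') \<in> ideal_pow S N k"
      using F0(3)[OF h1 h2 h3] .
    moreover have "finsum S g (insert z0 F') = g z0 \<oplus>\<^bsub>S\<^esub> finsum S g F'"
    proof -
      have "g \<in> F' \<rightarrow> carrier S" using gc F'f(3) by blast
      from S.finsum_insert[where f=g, OF F'f(1,2) this gc[OF z0G]] show ?thesis .
    qed
    moreover have sJ: "finsum S g F' \<in> J"
      using S.finsum_in_ideal[OF Jid F'f(1)] gJ F'f by auto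
    ultimately have e: "x i \<ominus>\<^bsub>S\<^esub> (c z0 \<oplus>\<^bsub>S\<^esub> finsum S g F') \<in> ideal_pow S N k" using g0 by simp
    have sc: "finsum S g F' \<in> carrier S" using ideal.Icarr[OF Jid sJ] .
    have "x i \<ominus>\<^bsub>S\<^esub> c z0 = finsum S g F' \<oplus>\<^bsub>S\<^esub> (x i \<ominus>\<^bsub>S\<^esub> (c z0 \<oplus>\<^bsub>S\<^esub> finsum S g F'))"
      using S.alg1[OF sc, of "x i \<ominus>\<^bsub>S\<^esub> c z0"] S.alg2[OF xic c0c sc] sc c0c xic by simp
    then show "x i \<ominus>\<^bsub>S\<^esub> c z0 \<in> J <+>\<^bsub>S\<^esub> ideal_pow S N k"
      unfolding S.set_add_mem_iff using sJ e by blast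
  qed
  have "x i \<ominus>\<^bsub>S\<^esub> c z0 \<in> J"
    using S.krull_closed[OF noeth loc Jid _ key] xic c0c by simp
  then have d: "x i \<ominus>\<^bsub>S\<^esub> c z0 \<in> I" using JI by blast
  have c0I: "c z0 \<in> I"
  proof -
    have "c z0 = x i \<ominus>\<^bsub>S\<^esub> (x i \<ominus>\<^bsub>S\<^esub> c z0)"
      using S.alg3[OF xic c0c] by simp
    then show ?thesis
    proof -
      have "x i \<oplus>\<^bsub>S\<^esub> (\<ominus>\<^bsub>S\<^esub> (x i \<ominus>\<^bsub>S\<^esub> c z0)) \<in> I"
        using additive_subgroup.a_closed[OF ideal.axioms(1)[OF Iid] xI[OF i(1)]
              additive_subgroup.a_inv_closed[OF ideal.axioms(1)[OF Iid] d]] .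
      moreover assume "c z0 = x i \<ominus>\<^bsub>S\<^esub> (x i \<ominus>\<^bsub>S\<^esub> c z0)"
      ultimately show ?thesis by (simp add: S.minus_eq)
    qed
  qed
  obtain C where C: "C \<in> carrier (S Quot I)" "c z0 = \<sigma> C" using c z0G by blast
  have "I +>\<^bsub>S\<^esub> c z0 = I" using S.a_rcos_zero[OF Iid c0I] .
  then have "C = I" using \<sigma>c(2)[OF C(1)] C(2) by simp
  then have "c z0 = \<zero>\<^bsub>S\<^esub>" using C(2) \<sigma>0 by simp
  then have xiJ: "x i \<in> J" using \<open>x i \<ominus>\<^bsub>S\<^esub> c z0 \<in> J\<close> xic by (simp add: S.minus_eq)
  have "x ` {..<r} \<subseteq> J" using xJ xiJ by auto
  then have "I \<subseteq> J" unfolding Idef using S.genideal_minimal[OF Jid] by blast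
  then have IJ: "I = J" using JI by blast
  define y where "y = (\<lambda>k. if k < i then x k else x (Suc k))"
  have yimg: "y ` {..<r - 1} = x ` ({..<r} - {i})"
  proof
    show "y ` {..<r - 1} \<subseteq> x ` ({..<r} - {i})"
      unfolding y_def using i(1) by auto
    show "x ` ({..<r} - {i}) \<subseteq> y ` {..<r - 1}"
    proof
      fix t assume "t \<in> x ` ({..<r} - {i})"
      then obtain j where j: "j < r" "j \<noteq> i" "t = x j" by blast
      show "t \<in> y ` {..<r - 1}"
      proof (cases "j < i")
        case True
        then have "y j = t" unfolding y_def using j by simp
        moreover have "j < r - 1" using True i(1) by simp
        ultimately show ?thesis by blast
      next
        case False
        then have h: "\<not> (j - 1 < i)" "Suc (j - 1) = j" using j by auto
        then have "y (j - 1) = t" unfolding y_def using j(3) by simp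
        moreover have "j - 1 < r - 1" using False j by simp
        ultimately show ?thesis by blast
      qed
    qed
  qed
  have "I = Idl\<^bsub>S\<^esub> (y ` {..<r - 1})" using IJ yimg unfolding J_def by simp
  moreover have "r - 1 < r" using i(1) by simp
  moreover have "y ` {..<r - 1} \<subseteq> carrier S" using yimg Jsub by simp
  ultimately show False using minim by blast
qed

end
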